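(* Let $h\geq 2$. A subgroup $U\leq S_h\times\{id\}$ is an anonymity group with respect to $(h,n)$ for some $n\geq 2$ (here $\{id\}$ is the trivial subgroup of $S_n$), and every subgroup of $S_h\times\{id\}$ arises in this way. Consequently, the set of all anonymity groups (over all $h,n\geq 2$) is exactly $\{V\times\{id\}: V\ \text{a permutation group}\}$.
   Context: Permutations compose as $(\sigma\tau)(x)=\sigma(\tau(x))$. For integers $h,n\geq2$, let $G=S_h\times S_n$ and $\mathcal{P}=(S_n)^h$ (preference profiles), with $G$ acting by $(p^{(\varphi,\psi)})_i=\psi\,p_{\varphi^{-1}(i)}$. A social preference function (SPF) is any $F:\mathcal{P}\to S_n$; its symmetry group is $G(F)=\{(\varphi,\psi)\in G: F(p^{(\varphi,\psi)})=\psi F(p)\ \forall p\}$ and its anonymity group is $G_1(F)=G(F)\cap(S_h\times\{id\})$. A subgroup $U\leq S_h\times\{id\}$ is an anonymity group with respect to $(h,n)$ if $U=G_1(F)$ for some SPF $F$ on $\mathcal{P}=(S_n)^h$. *)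

theory Defs
  imports "HOL-Combinatorics.Permutations"
begin

definition Sym :: "nat \<Rightarrow> (nat \<Rightarrow> nat) set" where
  "Sym m = {\<sigma>. \<sigma> permutes {0..<m}}"

text \<open>Preference profiles (S_n)^h: voter i < h gets a permutation of {0..<n};
  values at indices >= h are fixed to id (canonical representative).\<close>

definition profiles :: "nat \<Rightarrow> nat \<Rightarrow> (nat \<Rightarrow> nat \<Rightarrow> nat) set" where
  "profiles h n = {p. (\<forall>i<h. p i \<in> Sym n) \<and> (\<forall>i. h \<le> i \<longrightarrow> p i = id)}"

definition act :: "nat \<Rightarrow> (nat \<Rightarrow> nat) \<Rightarrow> (nat \<Rightarrow> nat) \<Rightarrow> (nat \<Rightarrow> nat \<Rightarrow> nat) \<Rightarrow> (nat \<Rightarrow> nat \<Rightarrow> nat)" where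
  "act h \<phi> \<psi> p = (\<lambda>i. if i < h then \<psi> \<circ> p (inv \<phi> i) else id)"

text \<open>A social preference function: a map from profiles to S_n (values outside
  profiles are irrelevant).\<close>

definition is_SPF :: "nat \<Rightarrow> nat \<Rightarrow> ((nat \<Rightarrow> nat \<Rightarrow> nat) \<Rightarrow> (nat \<Rightarrow> nat)) \<Rightarrow> bool" where
  "is_SPF h n F \<longleftrightarrow> (\<forall>p\<in>profiles h n. F p \<in> Sym n)"

definition symmetry_group :: "nat \<Rightarrow> nat \<Rightarrow> ((nat \<Rightarrow> nat \<Rightarrow> nat) \<Rightarrow> (nat \<Rightarrow> nat))
    \<Rightarrow> ((nat \<Rightarrow> nat) \<times> (nat \<Rightarrow> nat)) set" where
  "symmetry_group h n F = {(\<phi>, \<psi>). \<phi> \<in> Sym h \<and> \<psi> \<in> Sym n \<and>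
      (\<forall>p\<in>profiles h n. F (act h \<phi> \<psi> p) = \<psi> \<circ> F p)}"

definition anonymity_group_of :: "nat \<Rightarrow> nat \<Rightarrow> ((nat \<Rightarrow> nat \<Rightarrow> nat) \<Rightarrow> (nat \<Rightarrow> nat))
    \<Rightarrow> ((nat \<Rightarrow> nat) \<times> (nat \<Rightarrow> nat)) set" where
  "anonymity_group_of h n F = symmetry_group h n F \<inter> (Sym h \<times> {id})"

definition is_anonymity_group :: "nat \<Rightarrow> nat \<Rightarrow> ((nat \<Rightarrow> nat) \<times> (nat \<Rightarrow> nat)) set \<Rightarrow> bool" where
  "is_anonymity_group h n U \<longleftrightarrow> (\<exists>F. is_SPF h n F \<and> U = anonymity_group_of h n F)"

definition perm_subgroup :: "nat \<Rightarrow> (nat \<Rightarrow> nat) set \<Rightarrow> bool" where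
  "perm_subgroup h V \<longleftrightarrow> V \<subseteq> Sym h \<and> id \<in> V \<and>
     (\<forall>a\<in>V. \<forall>b\<in>V. a \<circ> b \<in> V) \<and> (\<forall>a\<in>V. inv a \<in> V)"

end

theory Submission
  imports Defs
begin

lemma inv_lt: "\<phi> \<in> Sym h \<Longrightarrow> i < h \<Longrightarrow> inv \<phi> i < h"
proof -
  assume "\<phi> \<in> Sym h" "i < h"
  then have "inv \<phi> permutes {0..<h}" unfolding Sym_def by (simp add: permutes_inv)
  then show ?thesis using \<open>i < h\<close> using permutes_in_image[of "inv \<phi>" "{0..<h}" i] by simp
qed

lemma act_prof:
  assumes "\<phi> \<in> Sym h" "p \<in> profiles h n" "\<psi> \<in> Sym n"
  shows "act h \<phi> \<psi> p \<in> profiles h n"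
proof -
  have "\<psi> \<circ> p (inv \<phi> i) \<in> Sym n" if "i < h" for i
  proof -
    have "p (inv \<phi> i) \<in> Sym n" using assms(2) inv_lt[OF assms(1) that]
      unfolding profiles_def by auto
    then show ?thesis using assms(3) unfolding Sym_def by (simp add: permutes_compose)
  qed
  then show ?thesis unfolding profiles_def act_def by auto
qed

lemma act_comp:
  assumes "\<phi> \<in> Sym h" "\<phi>' \<in> Sym h"
  shows "act h \<phi> id (act h \<phi>' id p) = act h (\<phi> \<circ> \<phi>') id p"
proof -
  have b: "bij \<phi>" "bij \<phi>'" using assms unfolding Sym_def by (auto intro: permutes_bij)
  have "inv (\<phi> \<circ> \<phi>') = inv \<phi>' \<circ> inv \<phi>" using b by (simp add: o_inv_distrib)
  then show ?thesis unfolding act_def using inv_lt[OF assms(1)] by (auto intro!: ext)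
qed

lemma act_id: "p \<in> profiles h n \<Longrightarrow> act h id id p = p"
  unfolding act_def profiles_def by (auto intro!: ext)

lemma id_Sym: "id \<in> Sym h"
  unfolding Sym_def by (simp add: permutes_id)

lemma part1:
  assumes h: "h \<ge> 2" and V: "perm_subgroup h V"
  shows "is_anonymity_group h h (V \<times> {id})"
proof -
  define p0 :: "nat \<Rightarrow> nat \<Rightarrow> nat" where
    "p0 = (\<lambda>i. if i < h then Transposition.transpose 0 i else id)"
  define tr :: "nat \<Rightarrow> nat" where "tr = Transposition.transpose 0 1"
  define F where "F = (\<lambda>p. if (\<exists>\<psi>\<in>V. p = act h \<psi> id p0) then id else tr)"
  have VS: "V \<subseteq> Sym h" and idV: "id \<in> V" and cV: "\<And>a b. a \<in> V \<Longrightarrow> b \<in> V \<Longrightarrow> a \<circ> b \<in> V"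
    and iV: "\<And>a. a \<in> V \<Longrightarrow> inv a \<in> V"
    using V unfolding perm_subgroup_def by auto
  have trS: "tr \<in> Sym h" unfolding tr_def Sym_def
    using h permutes_swap_id[of 0 "{0..<h}" 1] by simp
  have trne: "tr \<noteq> id"
  proof
    assume "tr = id"
    then have "tr 0 = 0" by simp
    then show False unfolding tr_def by simp
  qed
  have p0P: "p0 \<in> profiles h h"
  proof -
    have "Transposition.transpose 0 i permutes {0..<h}" if "i < h" for i
      using h that permutes_swap_id[of 0 "{0..<h}" i] by simp
    then show ?thesis unfolding profiles_def p0_def Sym_def by simp
  qed
  have p0v: "p0 i 0 = i" if "i < h" for i
    using that unfolding p0_def by simp
  have SPF: "is_SPF h h F" unfolding is_SPF_def F_def using trS id_Sym by auto
  have "anonymity_group_of h h F = V \<times> {id}"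
  proof (rule set_eqI, clarify)
    fix \<phi> \<psi>
    show "((\<phi>, \<psi>) \<in> anonymity_group_of h h F) = ((\<phi>, \<psi>) \<in> V \<times> {id})"
    proof
      assume a: "(\<phi>, \<psi>) \<in> anonymity_group_of h h F"
      then have \<psi>: "\<psi> = id" and \<phi>S: "\<phi> \<in> Sym h"
        and eq: "\<And>p. p \<in> profiles h h \<Longrightarrow> F (act h \<phi> id p) = F p"
        unfolding anonymity_group_of_def symmetry_group_def by auto
      have "\<phi> \<in> V"
      proof (rule ccontr)
        assume nV: "\<phi> \<notin> V"
        have "F p0 = id" 
        proof -
          have "\<exists>\<psi>\<in>V. p0 = act h \<psi> id p0" using idV act_id[OF p0P] by force
          then show ?thesis unfolding F_def by simp
        qed
        moreover have "\<not> (\<exists>\<psi>\<in>V. act h \<phi> id p0 = act h \<psi> id p0)"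
        proof
          assume "\<exists>\<psi>\<in>V. act h \<phi> id p0 = act h \<psi> id p0"
          then obtain \<psi>' where \<psi>'V: "\<psi>' \<in> V" and e: "act h \<phi> id p0 = act h \<psi>' id p0" by blast
          have \<psi>'S: "\<psi>' \<in> Sym h" using \<psi>'V VS by auto
          have "inv \<phi> i = inv \<psi>' i" for i
          proof (cases "i < h")
            case True
            have "act h \<phi> id p0 i 0 = act h \<psi>' id p0 i 0" using e by simp
            then show ?thesis using True unfolding act_def
              using p0v[OF inv_lt[OF \<phi>S True]] p0v[OF inv_lt[OF \<psi>'S True]] by simp
          next
            case False
            have "inv \<phi> permutes {0..<h}" "inv \<psi>' permutes {0..<h}"
              using \<phi>S \<psi>'S unfolding Sym_def by (auto intro: permutes_inv)
            then show ?thesis using False by (simp add: permutes_not_in)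
          qed
          then have "inv \<phi> = inv \<psi>'" by auto
          moreover have "inv (inv \<phi>) = \<phi>" "inv (inv \<psi>') = \<psi>'"
            using \<phi>S \<psi>'S unfolding Sym_def by (simp_all add: permutes_inv_inv)
          ultimately have "\<phi> = \<psi>'" by metis
          then show False using nV \<psi>'V by simp
        qed
        then have "F (act h \<phi> id p0) = tr" unfolding F_def by auto
        ultimately show False using eq[OF p0P] trne by simp
      qed
      then show "(\<phi>, \<psi>) \<in> V \<times> {id}" using \<psi> by simp
    next
      assume "(\<phi>, \<psi>) \<in> V \<times> {id}"
      then have \<phi>V: "\<phi> \<in> V" and \<psi>: "\<psi> = id" by auto
      have \<phi>S: "\<phi> \<in> Sym h" using \<phi>V VS by auto
      have iS: "inv \<phi> \<in> Sym h" using iV[OF \<phi>V] VS by auto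
      have "F (act h \<phi> id p) = F p" if pP: "p \<in> profiles h h" for p
      proof -
        have "(\<exists>\<psi>\<in>V. act h \<phi> id p = act h \<psi> id p0) = (\<exists>\<psi>\<in>V. p = act h \<psi> id p0)"
        proof
          assume "\<exists>\<psi>\<in>V. act h \<phi> id p = act h \<psi> id p0"
          then obtain \<psi>' where \<psi>'V: "\<psi>' \<in> V" and e: "act h \<phi> id p = act h \<psi>' id p0" by blast
          have \<psi>'S: "\<psi>' \<in> Sym h" using \<psi>'V VS by auto
          have "p = act h id id p" using act_id[OF pP] by simp
          also have "\<dots> = act h (inv \<phi> \<circ> \<phi>) id p"
            using \<phi>S unfolding Sym_def by (simp add: permutes_inv_o)
          also have "\<dots> = act h (inv \<phi>) id (act h \<phi> id p)" using act_comp[OF iS \<phi>S] by simp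
          also have "\<dots> = act h (inv \<phi> \<circ> \<psi>') id p0" using e act_comp[OF iS \<psi>'S] by simp
          finally show "\<exists>\<psi>\<in>V. p = act h \<psi> id p0" using cV[OF iV[OF \<phi>V] \<psi>'V] by blast
        next
          assume "\<exists>\<psi>\<in>V. p = act h \<psi> id p0"
          then obtain \<psi>' where \<psi>'V: "\<psi>' \<in> V" and e: "p = act h \<psi>' id p0" by blast
          have \<psi>'S: "\<psi>' \<in> Sym h" using \<psi>'V VS by auto
          have "act h \<phi> id p = act h (\<phi> \<circ> \<psi>') id p0" using e act_comp[OF \<phi>S \<psi>'S] by simp
          then show "\<exists>\<psi>\<in>V. act h \<phi> id p = act h \<psi> id p0" using cV[OF \<phi>V \<psi>'V] by blast
        qed
        then show ?thesis unfolding F_def by simp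
      qed
      then show "(\<phi>, \<psi>) \<in> anonymity_group_of h h F"
        unfolding anonymity_group_of_def symmetry_group_def using \<psi> \<phi>S id_Sym by auto
    qed
  qed
  then show ?thesis unfolding is_anonymity_group_def using SPF by blast
qed

lemma part2:
  assumes "is_anonymity_group h n U"
  shows "\<exists>V. perm_subgroup h V \<and> U = V \<times> {id}"
proof -
  obtain F where U: "U = anonymity_group_of h n F" using assms unfolding is_anonymity_group_def by blast
  define V where "V = {\<phi>. \<phi> \<in> Sym h \<and> (\<forall>p\<in>profiles h n. F (act h \<phi> id p) = F p)}"
  have UV: "U = V \<times> {id}" unfolding U V_def anonymity_group_of_def symmetry_group_def
    using id_Sym by auto
  have "perm_subgroup h V"
    unfolding perm_subgroup_def
  proof (intro conjI ballI)
    show "V \<subseteq> Sym h" unfolding V_def by auto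
    show "id \<in> V" unfolding V_def using id_Sym act_id by auto
  next
    fix a b assume a: "a \<in> V" and b: "b \<in> V"
    have aS: "a \<in> Sym h" and bS: "b \<in> Sym h" using a b unfolding V_def by auto
    have "a \<circ> b \<in> Sym h" using aS bS unfolding Sym_def by (simp add: permutes_compose)
    moreover have "F (act h (a \<circ> b) id p) = F p" if "p \<in> profiles h n" for p
    proof -
      have "act h b id p \<in> profiles h n" using act_prof[OF bS that id_Sym] .
      then show ?thesis using a b that act_comp[OF aS bS, of p] unfolding V_def by auto
    qed
    ultimately show "a \<circ> b \<in> V" unfolding V_def by auto
  next
    fix a assume a: "a \<in> V"
    have aS: "a \<in> Sym h" using a unfolding V_def by auto
    have iS: "inv a \<in> Sym h" using aS unfolding Sym_def by (simp add: permutes_inv)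
    moreover have "F (act h (inv a) id p) = F p" if pP: "p \<in> profiles h n" for p
    proof -
      have q: "act h (inv a) id p \<in> profiles h n" using act_prof[OF iS pP id_Sym] .
      have "F (act h (inv a) id p) = F (act h a id (act h (inv a) id p))"
        using a q unfolding V_def by auto
      also have "\<dots> = F (act h (a \<circ> inv a) id p)" using act_comp[OF aS iS] by simp
      also have "\<dots> = F p" using aS act_id[OF pP] unfolding Sym_def by (simp add: permutes_inv_o)
      finally show ?thesis .
    qed
    ultimately show "inv a \<in> V" unfolding V_def by auto
  qed
  then show ?thesis using UV by blast
qed

theorem mainTheorem5:
  fixes h :: nat
  assumes "h \<ge> 2"
  shows "(\<forall>V. perm_subgroup h V \<longrightarrow>
            (\<exists>n\<ge>2. is_anonymity_group h n (V \<times> {id})))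
       \<and> (\<forall>U. (\<exists>n\<ge>2. is_anonymity_group h n U) \<longleftrightarrow>
            (\<exists>V. perm_subgroup h V \<and> U = V \<times> {id}))"
  using part1[OF assms] part2 assms by blast

end
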